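(* Let $G$ and $H$ be Hausdorff locally quasi-convex abelian groups. Then the dual groups of $G\otimes H$ and of $G\otimes_{\mathcal Q}H$ are (algebraically) isomorphic to $\mathbb X(G,H)$, the group of all continuous bicharacters of $G\times H$: $\widehat{G\otimes H}\simeq\widehat{G\otimes_{\mathcal Q}H}\simeq\mathbb X(G,H)$.
   Context: $\mathbb T=\mathbb R/\mathbb Z$; a character is a continuous homomorphism into $\mathbb T$ and $\widehat L$ denotes the group of characters of $L$. A continuous bihomomorphism $b:G\times H\to L$ is separately a continuous homomorphism in each variable and continuous at $(0,0)$; a continuous bicharacter is a continuous bihomomorphism into $\mathbb T$. $G\otimes H$ is the tensor product in the category of all topological abelian groups: the quotient $A(G\times H)/N$ of the free abelian topological group on the space $G\times H$ by the subgroup $N$ generated by all $\sigma(a+b,c)-\sigma(a,c)-\sigma(b,c)$ and $\sigma(a,c+d)-\sigma(a,c)-\sigma(a,d)$ ($\sigma$ the canonical map), with $\otimes$ the composite of $\sigma$ and the quotient map. A subset $A$ of $L$ is quasi-convex if for every $g\notin A$ there is a character $\chi$ with $|\chi(a)|\le1/4$ on $A$ and $|\chi(g)|>1/4$; $\mathcal Q$ is the class of Hausdorff abelian groups with a basis at $0$ of quasi-convex sets. For $G,H\in\mathcal Q$, $G\otimes_{\mathcal Q}H$ is the group in $\mathcal Q$ with a continuous bihomomorphism $\otimes_{\mathcal Q}:G\times H\to G\otimes_{\mathcal Q}H$ through which every continuous bihomomorphism into a group of $\mathcal Q$ factors via a unique continuous homomorphism (unique up to topological isomorphism). *)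

theory Defs
  imports "HOL-Analysis.Analysis" "HOL-Algebra.Free_Abelian_Groups" "HOL-Algebra.Generated_Groups"
begin

definition top_ab_group :: "('a, 'm) monoid_scheme \<Rightarrow> 'a topology \<Rightarrow> bool" where
  "top_ab_group G T \<longleftrightarrow> comm_group G \<and> topspace T = carrier G
     \<and> continuous_map (prod_topology T T) T (\<lambda>(x, y). x \<otimes>\<^bsub>G\<^esub> y)
     \<and> continuous_map T T (\<lambda>x. inv\<^bsub>G\<^esub> x)"

text \<open>We realise T = R/Z as the unit circle in the complex plane (via t \<mapsto> exp(2 pi i t)).
The "absolute value" |t| of t in R/Z (distance to the nearest integer) corresponds to
|Arg z| / (2 pi).\<close>

definition circle_group :: "complex monoid" where
  "circle_group = \<lparr>carrier = sphere 0 1, monoid.mult = (*), one = 1\<rparr>"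

definition circle_top :: "complex topology" where
  "circle_top = subtopology euclidean (sphere 0 1)"

definition tnorm :: "complex \<Rightarrow> real" where
  "tnorm z = \<bar>Arg z\<bar> / (2 * pi)"

definition characters :: "('a, 'm) monoid_scheme \<Rightarrow> 'a topology \<Rightarrow> ('a \<Rightarrow> complex) set" where
  "characters G T = {chr. chr \<in> hom G circle_group \<and> continuous_map T circle_top chr
                         \<and> chr \<in> extensional (carrier G)}"

definition dual_group :: "('a, 'm) monoid_scheme \<Rightarrow> 'a topology \<Rightarrow> ('a \<Rightarrow> complex) monoid" where
  "dual_group G T = \<lparr>carrier = characters G T,
     monoid.mult = (\<lambda>chr psi. \<lambda>x\<in>carrier G. chr x * psi x),
     one = (\<lambda>x\<in>carrier G. 1)\<rparr>"

definition cont_bihom ::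
  "('a, 'm) monoid_scheme \<Rightarrow> 'a topology \<Rightarrow> ('b, 'n) monoid_scheme \<Rightarrow> 'b topology
   \<Rightarrow> ('c, 'k) monoid_scheme \<Rightarrow> 'c topology \<Rightarrow> ('a \<Rightarrow> 'b \<Rightarrow> 'c) \<Rightarrow> bool" where
  "cont_bihom G TG H TH L TL b \<longleftrightarrow>
     (\<forall>x \<in> carrier G. b x \<in> hom H L \<and> continuous_map TH TL (b x)) \<and>
     (\<forall>y \<in> carrier H. (\<lambda>x. b x y) \<in> hom G L \<and> continuous_map TG TL (\<lambda>x. b x y)) \<and>
     (\<forall>V. openin TL V \<and> b \<one>\<^bsub>G\<^esub> \<one>\<^bsub>H\<^esub> \<in> V \<longrightarrow>
        (\<exists>U. openin (prod_topology TG TH) U \<and> (\<one>\<^bsub>G\<^esub>, \<one>\<^bsub>H\<^esub>) \<in> U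
             \<and> (\<forall>(x, y) \<in> U. b x y \<in> V)))"

definition bichar_group ::
  "('a, 'm) monoid_scheme \<Rightarrow> 'a topology \<Rightarrow> ('b, 'n) monoid_scheme \<Rightarrow> 'b topology
   \<Rightarrow> ('a \<Rightarrow> 'b \<Rightarrow> complex) monoid" where
  "bichar_group G TG H TH = \<lparr>
     carrier = {b. cont_bihom G TG H TH circle_group circle_top b
                   \<and> b \<in> extensional (carrier G) \<and> (\<forall>x \<in> carrier G. b x \<in> extensional (carrier H))},
     monoid.mult = (\<lambda>b c. \<lambda>x\<in>carrier G. \<lambda>y\<in>carrier H. b x y * c x y),
     one = (\<lambda>x\<in>carrier G. \<lambda>y\<in>carrier H. 1)\<rparr>"

definition quasi_convex :: "('a, 'm) monoid_scheme \<Rightarrow> 'a topology \<Rightarrow> 'a set \<Rightarrow> bool" where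
  "quasi_convex G T A \<longleftrightarrow> A \<subseteq> carrier G \<and>
     (\<forall>g \<in> carrier G - A. \<exists>chr \<in> characters G T.
        (\<forall>a \<in> A. tnorm (chr a) \<le> 1/4) \<and> tnorm (chr g) > 1/4)"

definition locally_quasi_convex :: "('a, 'm) monoid_scheme \<Rightarrow> 'a topology \<Rightarrow> bool" where
  "locally_quasi_convex G T \<longleftrightarrow>
     (\<forall>U. openin T U \<and> \<one>\<^bsub>G\<^esub> \<in> U \<longrightarrow>
        (\<exists>V. quasi_convex G T V \<and> V \<subseteq> U \<and> \<one>\<^bsub>G\<^esub> \<in> T interior_of V))"

definition class_Q :: "('a, 'm) monoid_scheme \<Rightarrow> 'a topology \<Rightarrow> bool" where
  "class_Q G T \<longleftrightarrow> top_ab_group G T \<and> Hausdorff_space T \<and> locally_quasi_convex G T"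

text \<open>A(X) for a topological space X: the free abelian group on the points of X, carrying
the finest group topology making the canonical map sigma continuous (Markov/Graev).  The
supremum of group topologies is a group topology, so this is the topology generated by the
union of all such topologies.\<close>

definition free_top_ab_topology :: "'a topology \<Rightarrow> ('a \<Rightarrow>\<^sub>0 int) topology" where
  "free_top_ab_topology X = topology_generated_by
     (\<Union> {{U. openin T U} | T. top_ab_group (free_Abelian_group (topspace X)) T
                              \<and> continuous_map X T frag_of})"

definition tensor_A :: "('a, 'm) monoid_scheme \<Rightarrow> ('b, 'n) monoid_scheme \<Rightarrow> ('a \<times> 'b \<Rightarrow>\<^sub>0 int) monoid" where
  "tensor_A G H = free_Abelian_group (carrier G \<times> carrier H)"

definition tensor_N :: "('a, 'm) monoid_scheme \<Rightarrow> ('b, 'n) monoid_scheme \<Rightarrow> ('a \<times> 'b \<Rightarrow>\<^sub>0 int) set" where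
  "tensor_N G H = generate (tensor_A G H)
     ({frag_of (a \<otimes>\<^bsub>G\<^esub> a', c) - frag_of (a, c) - frag_of (a', c) | a a' c.
         a \<in> carrier G \<and> a' \<in> carrier G \<and> c \<in> carrier H} \<union>
      {frag_of (a, c \<otimes>\<^bsub>H\<^esub> c') - frag_of (a, c) - frag_of (a, c') | a c c'.
         a \<in> carrier G \<and> c \<in> carrier H \<and> c' \<in> carrier H})"

definition tensor_group :: "('a, 'm) monoid_scheme \<Rightarrow> ('b, 'n) monoid_scheme \<Rightarrow> ('a \<times> 'b \<Rightarrow>\<^sub>0 int) set monoid" where
  "tensor_group G H = tensor_A G H Mod tensor_N G H"

definition tensor_top :: "('a, 'm) monoid_scheme \<Rightarrow> 'a topology \<Rightarrow> ('b, 'n) monoid_scheme \<Rightarrow> 'b topology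
   \<Rightarrow> ('a \<times> 'b \<Rightarrow>\<^sub>0 int) set topology" where
  "tensor_top G TG H TH = topology (\<lambda>U. U \<subseteq> carrier (tensor_group G H) \<and>
      openin (free_top_ab_topology (prod_topology TG TH)) (\<Union> U))"

definition tensor_map :: "('a, 'm) monoid_scheme \<Rightarrow> ('b, 'n) monoid_scheme \<Rightarrow> 'a \<Rightarrow> 'b \<Rightarrow> ('a \<times> 'b \<Rightarrow>\<^sub>0 int) set" where
  "tensor_map G H x y = tensor_N G H #>\<^bsub>tensor_A G H\<^esub> frag_of (x, y)"

text \<open>(Q, TQ, t) is a Q-tensor product of G and H with respect to target groups carried by the
type 'd: Q is in the class Q, t is a continuous bihomomorphism, and every continuous
bihomomorphism into a group of Q (carried by 'd) factors as f o t for a unique continuous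
homomorphism f (unique on the carrier).\<close>

definition is_Q_tensor ::
  "'d itself \<Rightarrow> ('a, 'm) monoid_scheme \<Rightarrow> 'a topology \<Rightarrow> ('b, 'n) monoid_scheme \<Rightarrow> 'b topology
   \<Rightarrow> ('c, 'k) monoid_scheme \<Rightarrow> 'c topology \<Rightarrow> ('a \<Rightarrow> 'b \<Rightarrow> 'c) \<Rightarrow> bool" where
  "is_Q_tensor (_ :: 'd itself) G TG H TH Q TQ t \<longleftrightarrow>
     class_Q Q TQ \<and> cont_bihom G TG H TH Q TQ t \<and>
     (\<forall>(L :: 'd monoid) TL b. class_Q L TL \<and> cont_bihom G TG H TH L TL b \<longrightarrow>
        (\<exists>!f. f \<in> hom Q L \<and> continuous_map TQ TL f \<and> f \<in> extensional (carrier Q) \<and>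
              (\<forall>x \<in> carrier G. \<forall>y \<in> carrier H. f (t x y) = b x y)))"

end

theory Submission
  imports Defs
begin


lemma circle_carrier [simp]: "carrier circle_group = sphere 0 1"
  and circle_mult [simp]: "x \<otimes>\<^bsub>circle_group\<^esub> y = x * y"
  and circle_one [simp]: "\<one>\<^bsub>circle_group\<^esub> = 1"
  by (auto simp: circle_group_def)

lemma circle_comm_group: "comm_group circle_group"
proof -
  have "group circle_group"
  proof (rule groupI)
    fix x assume "x \<in> carrier circle_group"
    then show "\<exists>y\<in>carrier circle_group. y \<otimes>\<^bsub>circle_group\<^esub> x = \<one>\<^bsub>circle_group\<^esub>"
      by (intro bexI[of _ "inverse x"]) (auto simp: norm_inverse intro!: left_inverse)
  qed (auto simp: norm_mult mult.assoc)
  then show ?thesis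
    by (rule group.group_comm_groupI) (auto simp: mult.commute)
qed

lemma circle_group: "group circle_group"
  using circle_comm_group comm_group.axioms(2) by blast

lemma circle_inv [simp]: "x \<in> sphere 0 1 \<Longrightarrow> inv\<^bsub>circle_group\<^esub> x = inverse x"
  by (rule group.inv_equality[OF circle_group]) (auto simp: norm_inverse intro!: left_inverse)

lemma topspace_circle [simp]: "topspace circle_top = sphere 0 1"
  by (simp add: circle_top_def)

lemma circle_top_ab: "top_ab_group circle_group circle_top"
  unfolding top_ab_group_def
proof (intro conjI)
  show "comm_group circle_group" by (rule circle_comm_group)
  show "topspace circle_top = carrier circle_group" by simp
  have "continuous_map (prod_topology circle_top circle_top) circle_top (\<lambda>(x, y). x * y)"
    unfolding circle_top_def subtopology_Times[symmetric] prod_topology_euclidean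
    by (rule continuous_map_into_subtopology)
       (auto intro!: continuous_map_from_subtopology continuous_intros simp: norm_mult
             simp flip: continuous_map_iff_continuous2 simp: case_prod_unfold)
  then show "continuous_map (prod_topology circle_top circle_top) circle_top (\<lambda>(x, y). x \<otimes>\<^bsub>circle_group\<^esub> y)"
    by simp
  have "continuous_map circle_top circle_top inverse"
    unfolding circle_top_def
    apply (rule continuous_map_into_subtopology)
     apply (subst continuous_map_iff_continuous)
     apply (rule continuous_on_inverse) apply (auto intro: continuous_intros simp: norm_inverse)
    done
  then show "continuous_map circle_top circle_top (\<lambda>x. inv\<^bsub>circle_group\<^esub> x)"
    by (rule continuous_map_eq) auto
qed

lemma circle_Hausdorff: "Hausdorff_space circle_top"
  unfolding circle_top_def by (intro Hausdorff_space_subtopology Hausdorff_space_euclidean)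



lemma sphere_exp_Arg: "z \<in> sphere 0 1 \<Longrightarrow> exp (\<i> * of_real (Arg z)) = z"
  using complex_norm_eq_1_exp_eq by auto

lemma abs_Arg_le: "\<bar>Arg z\<bar> \<le> pi"
  using Arg_bounded[of z] by auto

lemma abs_Arg_exp: assumes "\<bar>t\<bar> \<le> pi" shows "\<bar>Arg (exp (\<i> * of_real t))\<bar> = \<bar>t\<bar>"
proof (cases "t = - pi")
  case True
  have "exp (\<i> * of_real t) = -1" using True
    by (simp add: exp_eq_polar cis_conv_exp[symmetric] cis.code complex_eq_iff)
  then show ?thesis using True Arg_of_real[of "-1"] by simp
next
  case False
  then have "- pi < t" "t \<le> pi" using assms by auto
  then show ?thesis by (subst Arg_exp) auto
qed

lemma tnorm_power:
  assumes z: "z \<in> sphere 0 1" and n: "real n * \<bar>Arg z\<bar> \<le> pi"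
  shows "tnorm (z ^ n) = real n * tnorm z"
proof -
  have "z ^ n = exp (\<i> * of_real (Arg z)) ^ n" using sphere_exp_Arg[OF z] by simp
  also have "\<dots> = exp (\<i> * of_real (real n * Arg z))"
    by (simp add: exp_of_nat_mult[symmetric] algebra_simps)
  finally have "\<bar>Arg (z ^ n)\<bar> = \<bar>real n * Arg z\<bar>"
    using abs_Arg_exp[of "real n * Arg z"] n by (simp add: abs_mult)
  then show ?thesis by (simp add: tnorm_def abs_mult)
qed

lemma tnorm_le_half: "tnorm z \<le> 1/2"
  using abs_Arg_le[of z] by (simp add: tnorm_def divide_simps)

lemma tnorm_nonneg: "tnorm z \<ge> 0"
  by (simp add: tnorm_def)

lemma Re_sphere: assumes "z \<in> sphere 0 1" shows "Re z = cos (Arg z)"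
proof -
  have "Re z = Re (exp (\<i> * of_real (Arg z)))" using sphere_exp_Arg[OF assms] by simp
  then show ?thesis by (simp add: Re_exp)
qed


definition pchr :: "nat \<Rightarrow> complex \<Rightarrow> complex" where
  "pchr n = (\<lambda>z\<in>sphere 0 1. z ^ n)"

lemma pchr_char: "pchr n \<in> characters circle_group circle_top"
  unfolding characters_def
proof (intro CollectI conjI)
  show "pchr n \<in> hom circle_group circle_group"
    by (rule homI) (auto simp: pchr_def norm_mult norm_power power_mult_distrib)
  have "continuous_map circle_top circle_top (\<lambda>z. z ^ n)"
    unfolding circle_top_def
    by (rule continuous_map_into_subtopology)
       (auto simp: continuous_map_iff_continuous norm_power intro!: continuous_intros)
  then show "continuous_map circle_top circle_top (pchr n)"
    by (rule continuous_map_eq) (auto simp: pchr_def)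
  show "pchr n \<in> extensional (carrier circle_group)" by (simp add: pchr_def)
qed

definition qarc :: "nat \<Rightarrow> complex set" where
  "qarc m = {z \<in> sphere 0 1. tnorm z \<le> 1 / (4 * real m)}"

lemma quasi_convex_qarc:
  assumes m: "m \<ge> 1"
  shows "quasi_convex circle_group circle_top (qarc m)"
  unfolding quasi_convex_def
proof (intro conjI ballI)
  show "qarc m \<subseteq> carrier circle_group" by (auto simp: qarc_def)
  fix g assume g: "g \<in> carrier circle_group - qarc m"
  then have gs: "g \<in> sphere 0 1" and gt: "tnorm g > 1 / (4 * real m)"
    by (auto simp: qarc_def)
  define s where "s = tnorm g"
  have s_pos: "s > 0" using gt m unfolding s_def
    by (smt (verit) divide_pos_pos of_nat_0_less_iff less_le_trans le_numeral_extra(2) zero_less_one)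
  have s_le: "s \<le> 1/2" using tnorm_le_half s_def by simp
  define n where "n = nat \<lfloor>1 / (4 * s)\<rfloor> + 1"
  have fl0: "\<lfloor>1 / (4 * s)\<rfloor> \<ge> 0" using s_pos by simp
  have rn: "real n = of_int \<lfloor>1 / (4 * s)\<rfloor> + 1"
    using fl0 unfolding n_def by simp
  have n1: "real n > 1 / (4 * s)" using rn by linarith
  have n2: "real n - 1 \<le> 1 / (4 * s)" using rn by linarith
  have ns_gt: "real n * s > 1/4" using n1 s_pos by (simp add: field_simps)
  have ns_le: "real n * s \<le> 1/2"
  proof (cases "s \<le> 1/4")
    case True
    have "(real n - 1) * s \<le> 1/4" using n2 s_pos by (simp add: field_simps)
    then show ?thesis using True by (simp add: algebra_simps)
  next
    case False
    then have "1 / (4 * s) < 1" using s_pos by (simp add: field_simps)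
    then have "\<lfloor>1 / (4 * s)\<rfloor> = 0" using fl0 by linarith
    then have "n = 1" unfolding n_def by simp
    then show ?thesis using s_le by simp
  qed
  have "1 / (4 * s) < real m" using gt m s_pos unfolding s_def
    by (simp add: field_simps)
  then have "real n < real m + 1" using n2 by linarith
  then have "n < m + 1" by (metis of_nat_1 of_nat_add of_nat_less_iff)
  then have nm: "real n \<le> real m" by simp
  show "\<exists>chr\<in>characters circle_group circle_top.
          (\<forall>a\<in>qarc m. tnorm (chr a) \<le> 1 / 4) \<and> 1 / 4 < tnorm (chr g)"
  proof (intro bexI[of _ "pchr n"] conjI ballI)
    show "pchr n \<in> characters circle_group circle_top" by (rule pchr_char)
    have "real n * \<bar>Arg g\<bar> \<le> pi"
      using ns_le unfolding s_def tnorm_def by (simp add: field_simps)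
    then have "tnorm (pchr n g) = real n * s"
      using gs tnorm_power unfolding pchr_def s_def by simp
    then show "1 / 4 < tnorm (pchr n g)" using ns_gt by simp
    fix a assume a: "a \<in> qarc m"
    then have as: "a \<in> sphere 0 1" and at: "tnorm a \<le> 1 / (4 * real m)"
      by (auto simp: qarc_def)
    have "real n * tnorm a \<le> real m * (1 / (4 * real m))"
      using nm at tnorm_nonneg[of a] by (intro mult_mono) auto
    also have "\<dots> = 1/4" using m by simp
    finally have na: "real n * tnorm a \<le> 1/4" .
    have "real n * (\<bar>Arg a\<bar> * 2) \<le> pi"
      using na pi_gt_zero unfolding tnorm_def by (simp add: field_simps)
    moreover have "real n * (\<bar>Arg a\<bar> * 2) = 2 * (real n * \<bar>Arg a\<bar>)" by simp
    moreover have "0 \<le> real n * \<bar>Arg a\<bar>" by simp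
    ultimately have "real n * \<bar>Arg a\<bar> \<le> pi" by linarith
    then have "tnorm (pchr n a) = real n * tnorm a"
      using as tnorm_power unfolding pchr_def by simp
    then show "tnorm (pchr n a) \<le> 1/4" using na by simp
  qed
qed

lemma qarc_Re:
  assumes m: "m \<ge> 1" and z: "z \<in> sphere 0 1" and re: "Re z > cos (pi / (2 * real m))"
  shows "z \<in> qarc m"
proof -
  have "cos (pi / (2 * real m)) < cos \<bar>Arg z\<bar>" using re Re_sphere[OF z] by simp
  then have "\<bar>Arg z\<bar> < pi / (2 * real m)"
    using m abs_Arg_le[of z]
    by (subst (asm) cos_mono_less_eq) (auto simp: field_simps)
  then show ?thesis using z m unfolding qarc_def tnorm_def by (simp add: field_simps)
qed

lemma one_interior_qarc:
  assumes m: "m \<ge> 1"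
  shows "1 \<in> circle_top interior_of qarc m"
proof -
  define c where "c = cos (pi / (2 * real m))"
  have o: "openin circle_top ({z. Re z > c} \<inter> sphere 0 1)"
    unfolding circle_top_def
    by (auto simp: openin_open intro!: exI[of _ "{z. Re z > c}"] open_halfspace_Re_gt)
  have "c < cos 0" unfolding c_def using m
    by (subst cos_mono_less_eq) (auto simp: field_simps)
  then have "1 \<in> {z. Re z > c} \<inter> sphere 0 1" by simp
  moreover have "{z. Re z > c} \<inter> sphere 0 1 \<subseteq> circle_top interior_of qarc m"
    by (rule interior_of_maximal[OF _ o]) (use qarc_Re m c_def in auto)
  ultimately show ?thesis by blast
qed

lemma qarc_small:
  assumes m: "m \<ge> 1" and z: "z \<in> qarc m"
  shows "dist z 1 \<le> pi / (2 * real m)"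
proof -
  have zs: "z \<in> sphere 0 1" and zt: "tnorm z \<le> 1 / (4 * real m)" using z by (auto simp: qarc_def)
  have "dist z 1 = cmod (exp (\<i> * of_real (Arg z)) - 1)"
    using sphere_exp_Arg[OF zs] by (simp add: dist_norm)
  also have "\<dots> = 2 * \<bar>sin (Arg z / 2)\<bar>" by (rule dist_exp_i_1)
  also have "\<dots> \<le> 2 * \<bar>Arg z / 2\<bar>" using abs_sin_x_le_abs_x[of "Arg z / 2"] by simp
  also have "\<dots> = \<bar>Arg z\<bar>" by simp
  also have "\<dots> \<le> pi / (2 * real m)" using zt m unfolding tnorm_def by (simp add: field_simps)
  finally show ?thesis .
qed

lemma circle_lqc: "locally_quasi_convex circle_group circle_top"
  unfolding locally_quasi_convex_def
proof (intro allI impI)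
  fix U assume U: "openin circle_top U \<and> \<one>\<^bsub>circle_group\<^esub> \<in> U"
  then obtain T where T: "open T" "U = T \<inter> sphere 0 1"
    unfolding circle_top_def openin_subtopology by (auto simp: openin_open)
  have "1 \<in> T" using U T by auto
  then obtain e where e: "e > 0" "ball 1 e \<subseteq> T" using T(1) open_contains_ball by blast
  obtain m :: nat where mgt: "real m > pi / e" using reals_Archimedean2 by blast
  have m1: "m \<ge> 1"
  proof (rule ccontr)
    assume "\<not> m \<ge> 1" then have "m = 0" by simp
    then show False using mgt e pi_gt_zero by (simp add: divide_pos_pos) (smt (verit) divide_pos_pos pi_gt_zero)
  qed
  have "pi / (2 * real m) < e"
  proof -
    have "pi < e * real m" using mgt e by (simp add: field_simps)
    also have "\<dots> \<le> 2 * e * real m" using e by simp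
    finally have "pi < 2 * e * real m" .
    then show ?thesis using m1 e pi_gt_zero by (simp add: field_simps)
  qed
  have "qarc m \<subseteq> U"
  proof
    fix z assume z: "z \<in> qarc m"
    then have "dist 1 z < e" using qarc_small[OF m1 z] \<open>pi / (2 * real m) < e\<close> by (simp add: dist_commute)
    then have "z \<in> T" using e by auto
    then show "z \<in> U" using z T by (auto simp: qarc_def)
  qed
  then show "\<exists>V. quasi_convex circle_group circle_top V \<and> V \<subseteq> U \<and>
               \<one>\<^bsub>circle_group\<^esub> \<in> circle_top interior_of V"
    using quasi_convex_qarc[OF m1] one_interior_qarc[OF m1] by auto
qed

lemma circle_class_Q: "class_Q circle_group circle_top"
  unfolding class_Q_def using circle_top_ab circle_Hausdorff circle_lqc by blast



lemma hom_cong_carrier: "group G \<Longrightarrow> f \<in> hom G H \<Longrightarrow> (\<And>x. x \<in> carrier G \<Longrightarrow> f x = g x) \<Longrightarrow> g \<in> hom G H"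
  by (rule group.hom_restrict)

lemma class_Q_D:
  assumes "class_Q G T"
  shows "comm_group G" "group G" "topspace T = carrier G" "top_ab_group G T"
  using assms unfolding class_Q_def top_ab_group_def
  by (auto simp: comm_group_def)

lemma cont_bihom_cong:
  assumes tG: "topspace TG = carrier G" and tH: "topspace TH = carrier H"
    and gG: "group G" and gH: "group H"
    and eq: "\<And>x y. x \<in> carrier G \<Longrightarrow> y \<in> carrier H \<Longrightarrow> b x y = b' x y"
    and b: "cont_bihom G TG H TH L TL b"
  shows "cont_bihom G TG H TH L TL b'"
  unfolding cont_bihom_def
proof (intro conjI ballI allI impI)
  fix x assume x: "x \<in> carrier G"
  have "b x \<in> hom H L" "continuous_map TH TL (b x)" using b x unfolding cont_bihom_def by auto
  then show "b' x \<in> hom H L" "continuous_map TH TL (b' x)"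
    using eq x tH by (auto intro: hom_cong_carrier[OF gH] continuous_map_eq)
next
  fix y assume y: "y \<in> carrier H"
  have "(\<lambda>x. b x y) \<in> hom G L" "continuous_map TG TL (\<lambda>x. b x y)" using b y unfolding cont_bihom_def by auto
  then show "(\<lambda>x. b' x y) \<in> hom G L" "continuous_map TG TL (\<lambda>x. b' x y)"
    using eq y tG by (auto intro: hom_cong_carrier[OF gG] continuous_map_eq)
next
  fix V assume V: "openin TL V \<and> b' \<one>\<^bsub>G\<^esub> \<one>\<^bsub>H\<^esub> \<in> V"
  have "b \<one>\<^bsub>G\<^esub> \<one>\<^bsub>H\<^esub> = b' \<one>\<^bsub>G\<^esub> \<one>\<^bsub>H\<^esub>"
    using eq gG gH by (simp add: group.is_monoid monoid.one_closed)
  then obtain U where U: "openin (prod_topology TG TH) U" "(\<one>\<^bsub>G\<^esub>, \<one>\<^bsub>H\<^esub>) \<in> U"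
      "\<forall>(x, y)\<in>U. b x y \<in> V"
    using b V unfolding cont_bihom_def by auto
  have "U \<subseteq> carrier G \<times> carrier H" using openin_subset[OF U(1)] tG tH by simp
  have "\<forall>(x, y)\<in>U. b' x y \<in> V"
  proof (clarify)
    fix x y assume xy: "(x, y) \<in> U"
    then have c: "x \<in> carrier G" "y \<in> carrier H" using \<open>U \<subseteq> carrier G \<times> carrier H\<close> by auto
    have "b x y \<in> V" using U(3) xy by auto
    then show "b' x y \<in> V" using eq[OF c] by simp
  qed
  then show "\<exists>U. openin (prod_topology TG TH) U \<and> (\<one>\<^bsub>G\<^esub>, \<one>\<^bsub>H\<^esub>) \<in> U \<and> (\<forall>(x, y)\<in>U. b' x y \<in> V)"
    using U by blast
qed

lemma cont_bihom_comp:
  assumes t: "cont_bihom G TG H TH Q TQ t" and gG: "group G" and gH: "group H"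
    and tQ: "topspace TQ = carrier Q"
    and f: "f \<in> hom Q L" and fc: "continuous_map TQ TL f"
  shows "cont_bihom G TG H TH L TL (\<lambda>x y. f (t x y))"
  unfolding cont_bihom_def
proof (intro conjI ballI allI impI)
  fix x assume x: "x \<in> carrier G"
  have "f \<circ> t x \<in> hom H L" using t x f unfolding cont_bihom_def by (metis hom_compose)
  then show "(\<lambda>y. f (t x y)) \<in> hom H L" by (simp add: o_def)
  have "continuous_map TH TL (f \<circ> t x)" using t x fc unfolding cont_bihom_def
    by (metis continuous_map_compose)
  then show "continuous_map TH TL (\<lambda>y. f (t x y))" by (simp add: o_def)
next
  fix y assume y: "y \<in> carrier H"
  have "f \<circ> (\<lambda>x. t x y) \<in> hom G L" using t y f unfolding cont_bihom_def by (metis hom_compose)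
  then show "(\<lambda>x. f (t x y)) \<in> hom G L" by (simp add: o_def)
  have "continuous_map TG TL (f \<circ> (\<lambda>x. t x y))" using t y fc unfolding cont_bihom_def
    by (metis continuous_map_compose)
  then show "continuous_map TG TL (\<lambda>x. f (t x y))" by (simp add: o_def)
next
  fix V assume V: "openin TL V \<and> f (t \<one>\<^bsub>G\<^esub> \<one>\<^bsub>H\<^esub>) \<in> V"
  have "t \<one>\<^bsub>G\<^esub> \<in> hom H Q" using t gG unfolding cont_bihom_def
    by (simp add: group.is_monoid monoid.one_closed)
  then have t11: "t \<one>\<^bsub>G\<^esub> \<one>\<^bsub>H\<^esub> \<in> carrier Q" using gH
    by (simp add: group.is_monoid monoid.one_closed hom_in_carrier)
  define V' where "V' = {q \<in> topspace TQ. f q \<in> V}"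
  have "openin TQ V'" unfolding V'_def using fc V by (simp add: continuous_map_def)
  moreover have "t \<one>\<^bsub>G\<^esub> \<one>\<^bsub>H\<^esub> \<in> V'" using t11 tQ V unfolding V'_def by simp
  ultimately obtain U where U: "openin (prod_topology TG TH) U" "(\<one>\<^bsub>G\<^esub>, \<one>\<^bsub>H\<^esub>) \<in> U"
      "\<forall>(x, y)\<in>U. t x y \<in> V'"
    using t unfolding cont_bihom_def by auto
  then show "\<exists>U. openin (prod_topology TG TH) U \<and> (\<one>\<^bsub>G\<^esub>, \<one>\<^bsub>H\<^esub>) \<in> U \<and> (\<forall>(x, y)\<in>U. f (t x y) \<in> V)"
    unfolding V'_def by (intro exI[of _ U]) auto
qed

lemma part2:
  fixes G :: "'a monoid" and TG :: "'a topology"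
    and H :: "'b monoid" and TH :: "'b topology"
    and Q :: "'c monoid" and TQ :: "'c topology" and t :: "'a \<Rightarrow> 'b \<Rightarrow> 'c"
  assumes cG: "class_Q G TG" and cH: "class_Q H TH"
    and QT: "is_Q_tensor TYPE(complex) G TG H TH Q TQ t"
  shows "dual_group Q TQ \<cong> bichar_group G TG H TH"
proof -
  have cQ: "class_Q Q TQ" and tb: "cont_bihom G TG H TH Q TQ t"
    and univ: "\<And>b. cont_bihom G TG H TH circle_group circle_top b \<Longrightarrow>
        \<exists>!f. f \<in> hom Q circle_group \<and> continuous_map TQ circle_top f \<and> f \<in> extensional (carrier Q) \<and>
              (\<forall>x \<in> carrier G. \<forall>y \<in> carrier H. f (t x y) = b x y)"
    using QT circle_class_Q unfolding is_Q_tensor_def by blast+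
  note G = class_Q_D[OF cG] and H = class_Q_D[OF cH] and Qd = class_Q_D[OF cQ]
  have tcar: "t x y \<in> carrier Q" if "x \<in> carrier G" "y \<in> carrier H" for x y
    using tb that unfolding cont_bihom_def by (meson hom_in_carrier)
  define \<Phi> where "\<Phi> = (\<lambda>f::'c \<Rightarrow> complex. \<lambda>x\<in>carrier G. \<lambda>y\<in>carrier H. f (t x y))"
  have \<Phi>car: "\<Phi> f \<in> carrier (bichar_group G TG H TH)" if f: "f \<in> characters Q TQ" for f
  proof -
    have "cont_bihom G TG H TH circle_group circle_top (\<lambda>x y. f (t x y))"
      using f by (intro cont_bihom_comp[OF tb G(2) H(2) Qd(3)]) (auto simp: characters_def)
    then have "cont_bihom G TG H TH circle_group circle_top (\<Phi> f)"
      by (rule cont_bihom_cong[OF G(3) H(3) G(2) H(2), rotated]) (simp add: \<Phi>_def)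
    then show ?thesis by (simp add: bichar_group_def \<Phi>_def)
  qed
  have "\<Phi> \<in> iso (dual_group Q TQ) (bichar_group G TG H TH)"
    unfolding iso_iff
  proof (intro conjI)
    show "\<Phi> \<in> hom (dual_group Q TQ) (bichar_group G TG H TH)"
    proof (rule homI)
      fix f assume "f \<in> carrier (dual_group Q TQ)"
      then show "\<Phi> f \<in> carrier (bichar_group G TG H TH)" using \<Phi>car by (simp add: dual_group_def)
    next
      fix f g assume "f \<in> carrier (dual_group Q TQ)" "g \<in> carrier (dual_group Q TQ)"
      show "\<Phi> (f \<otimes>\<^bsub>dual_group Q TQ\<^esub> g) = \<Phi> f \<otimes>\<^bsub>bichar_group G TG H TH\<^esub> \<Phi> g"
        by (auto simp: \<Phi>_def dual_group_def bichar_group_def tcar fun_eq_iff)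
    qed
    show "inj_on \<Phi> (carrier (dual_group Q TQ))"
    proof (rule inj_onI)
      fix f g assume f: "f \<in> carrier (dual_group Q TQ)" and g: "g \<in> carrier (dual_group Q TQ)"
        and eq: "\<Phi> f = \<Phi> g"
      have fc: "f \<in> characters Q TQ" and gc: "g \<in> characters Q TQ" using f g by (auto simp: dual_group_def)
      have b: "cont_bihom G TG H TH circle_group circle_top (\<lambda>x y. f (t x y))"
        using fc by (intro cont_bihom_comp[OF tb G(2) H(2) Qd(3)]) (auto simp: characters_def)
      have "\<forall>x \<in> carrier G. \<forall>y \<in> carrier H. g (t x y) = f (t x y)"
      proof (intro ballI)
        fix x y assume "x \<in> carrier G" "y \<in> carrier H"
        then show "g (t x y) = f (t x y)" using fun_cong[OF fun_cong[OF eq, of x], of y]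
          by (simp add: \<Phi>_def)
      qed
      then show "f = g" using univ[OF b] fc gc unfolding characters_def by blast
    qed
    show "\<Phi> ` carrier (dual_group Q TQ) = carrier (bichar_group G TG H TH)"
    proof
      show "\<Phi> ` carrier (dual_group Q TQ) \<subseteq> carrier (bichar_group G TG H TH)"
        using \<Phi>car by (auto simp: dual_group_def)
      show "carrier (bichar_group G TG H TH) \<subseteq> \<Phi> ` carrier (dual_group Q TQ)"
      proof
        fix b assume b: "b \<in> carrier (bichar_group G TG H TH)"
        then have bb: "cont_bihom G TG H TH circle_group circle_top b"
          and be: "b \<in> extensional (carrier G)" "\<forall>x \<in> carrier G. b x \<in> extensional (carrier H)"
          by (auto simp: bichar_group_def)
        obtain f where f: "f \<in> hom Q circle_group" "continuous_map TQ circle_top f"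
          "f \<in> extensional (carrier Q)" "\<forall>x \<in> carrier G. \<forall>y \<in> carrier H. f (t x y) = b x y"
          using univ[OF bb] by blast
        have "f \<in> carrier (dual_group Q TQ)" using f by (simp add: dual_group_def characters_def)
        moreover have "\<Phi> f = b"
        proof (rule ext)
          fix x show "\<Phi> f x = b x"
          proof (cases "x \<in> carrier G")
            case True
            then show ?thesis using f(4) be(2) by (auto simp: \<Phi>_def fun_eq_iff extensional_def)
          next
            case False
            then show ?thesis using be(1) by (simp add: \<Phi>_def extensional_def)
          qed
        qed
        ultimately show "b \<in> \<Phi> ` carrier (dual_group Q TQ)" by blast
      qed
    qed
  qed
  then show ?thesis by (rule is_isoI)
qed



lemma unit3:
  fixes p q r :: complex
  assumes "norm p = 1" "norm q = 1" "norm r = 1"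
  shows "norm (p * q * r - 1) \<le> norm (p - 1) + norm (q - 1) + norm (r - 1)"
proof -
  have "p * q * r - 1 = p * q * (r - 1) + p * (q - 1) + (p - 1)" by (simp add: algebra_simps)
  also have "norm \<dots> \<le> norm (p * q * (r - 1)) + norm (p * (q - 1)) + norm (p - 1)"
    by (meson norm_triangle_ineq order_trans add_mono order_refl)
  also have "\<dots> = norm (r - 1) + norm (q - 1) + norm (p - 1)"
    using assms by (simp add: norm_mult)
  finally show ?thesis by simp
qed

lemma top_ab_D:
  assumes "top_ab_group G T"
  shows "comm_group G" "group G" "topspace T = carrier G"
    "continuous_map (prod_topology T T) T (\<lambda>(x, y). x \<otimes>\<^bsub>G\<^esub> y)"
    "continuous_map T T (\<lambda>x. inv\<^bsub>G\<^esub> x)"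
  using assms unfolding top_ab_group_def by (auto simp: comm_group_def)

lemma left_transl_cont:
  assumes "top_ab_group G T" "a \<in> carrier G"
  shows "continuous_map T T (\<lambda>x. a \<otimes>\<^bsub>G\<^esub> x)"
proof -
  have "continuous_map T (prod_topology T T) (\<lambda>x. (a, x))"
    using assms top_ab_D(3)[OF assms(1)]
    by (auto simp: continuous_map_pairwise o_def continuous_map_const)
  from continuous_map_compose[OF this top_ab_D(4)[OF assms(1)]]
  show ?thesis by (simp add: o_def)
qed

lemma circle_ball_open: "openin circle_top (ball c e \<inter> sphere 0 1)"
  unfolding circle_top_def by (auto simp: openin_open intro!: exI[of _ "ball c e"])

lemma bihom_joint_cont:
  fixes G :: "'a monoid" and H :: "'b monoid"
  assumes tG: "top_ab_group G TG" and tH: "top_ab_group H TH"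
    and b: "cont_bihom G TG H TH circle_group circle_top b"
  shows "continuous_map (prod_topology TG TH) circle_top (\<lambda>(x, y). b x y)"
proof -
  interpret G: comm_group G using top_ab_D[OF tG] by simp
  interpret H: comm_group H using top_ab_D[OF tH] by simp
  interpret C: comm_group circle_group by (rule circle_comm_group)
  note TGc = top_ab_D(3)[OF tG] and THc = top_ab_D(3)[OF tH]
  have bx: "b x \<in> hom H circle_group" "continuous_map TH circle_top (b x)" if "x \<in> carrier G" for x
    using b that unfolding cont_bihom_def by auto
  have by': "(\<lambda>x. b x y) \<in> hom G circle_group" "continuous_map TG circle_top (\<lambda>x. b x y)"
    if "y \<in> carrier H" for y
    using b that unfolding cont_bihom_def by auto
  have b0: "\<forall>V. openin circle_top V \<and> b \<one>\<^bsub>G\<^esub> \<one>\<^bsub>H\<^esub> \<in> V \<longrightarrow>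
        (\<exists>U. openin (prod_topology TG TH) U \<and> (\<one>\<^bsub>G\<^esub>, \<one>\<^bsub>H\<^esub>) \<in> U \<and> (\<forall>(x, y) \<in> U. b x y \<in> V))"
    using b unfolding cont_bihom_def by auto
  have bs: "b x y \<in> sphere 0 1" if "x \<in> carrier G" "y \<in> carrier H" for x y
    using hom_in_carrier[OF bx(1)[OF that(1)] that(2)] by simp
  have bmr: "b x (y \<otimes>\<^bsub>H\<^esub> y') = b x y * b x y'" if "x \<in> carrier G" "y \<in> carrier H" "y' \<in> carrier H" for x y y'
    using bx(1)[OF that(1)] that(2,3) by (simp add: hom_mult)
  have bml: "b (x \<otimes>\<^bsub>G\<^esub> x') y = b x y * b x' y" if "x \<in> carrier G" "x' \<in> carrier G" "y \<in> carrier H" for x x' y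
    using by'(1)[OF that(3)] that(1,2) hom_mult by fastforce
  have bone1: "b \<one>\<^bsub>G\<^esub> y = 1" if "y \<in> carrier H" for y
  proof -
    have "group_hom G circle_group (\<lambda>x. b x y)"
      using by'(1)[OF that] by (simp add: group_hom_def group_hom_axioms_def G.group_axioms C.group_axioms)
    then show ?thesis using group_hom.hom_one by fastforce
  qed
  have bone2: "b x \<one>\<^bsub>H\<^esub> = 1" if "x \<in> carrier G" for x
  proof -
    have "group_hom H circle_group (b x)"
      using bx(1)[OF that] by (simp add: group_hom_def group_hom_axioms_def H.group_axioms C.group_axioms)
    then show ?thesis using group_hom.hom_one by fastforce
  qed
  show ?thesis
    unfolding continuous_map_def
  proof (intro conjI allI impI)
    show "(\<lambda>(x, y). b x y) \<in> topspace (prod_topology TG TH) \<rightarrow> topspace circle_top"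
      using bs TGc THc by auto
    fix W assume W: "openin circle_top W"
    show "openin (prod_topology TG TH) {p \<in> topspace (prod_topology TG TH). (case p of (x, y) \<Rightarrow> b x y) \<in> W}"
      (is "openin _ ?S")
    proof (subst openin_subopen, intro ballI)
      fix p assume p: "p \<in> ?S"
      obtain x0 y0 where p0: "p = (x0, y0)" by fastforce
      have x0: "x0 \<in> carrier G" and y0: "y0 \<in> carrier H" and bW: "b x0 y0 \<in> W"
        using p p0 TGc THc by auto
      obtain T where T: "open T" "W = T \<inter> sphere 0 1"
        using W unfolding circle_top_def openin_subtopology by (auto simp: openin_open)
      obtain e where e: "e > 0" "ball (b x0 y0) e \<subseteq> T"
        using T bW open_contains_ball by blast
      define d where "d = e / 3"
      have d: "d > 0" using e by (simp add: d_def)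
      define V0 where "V0 = ball (1::complex) d \<inter> sphere 0 1"
      have V0o: "openin circle_top V0" unfolding V0_def by (rule circle_ball_open)
      have "b \<one>\<^bsub>G\<^esub> \<one>\<^bsub>H\<^esub> \<in> V0" using bone1[OF H.one_closed] d by (simp add: V0_def)
      then obtain U0 where U0: "openin (prod_topology TG TH) U0" "(\<one>\<^bsub>G\<^esub>, \<one>\<^bsub>H\<^esub>) \<in> U0"
          "\<forall>(x, y) \<in> U0. b x y \<in> V0"
        using b0 V0o by blast
      then obtain U1 V1 where UV1: "openin TG U1" "openin TH V1" "\<one>\<^bsub>G\<^esub> \<in> U1" "\<one>\<^bsub>H\<^esub> \<in> V1"
          "U1 \<times> V1 \<subseteq> U0"
        unfolding openin_prod_topology_alt by meson
      define Ua where "Ua = {u \<in> topspace TG. b u y0 \<in> V0}"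
      have Uao: "openin TG Ua" unfolding Ua_def using by'(2)[OF y0] V0o by (simp add: continuous_map_def)
      have "\<one>\<^bsub>G\<^esub> \<in> Ua" unfolding Ua_def V0_def using bone1[OF y0] TGc d by simp
      define Vb where "Vb = {v \<in> topspace TH. b x0 v \<in> V0}"
      have Vbo: "openin TH Vb" unfolding Vb_def using bx(2)[OF x0] V0o by (simp add: continuous_map_def)
      have "\<one>\<^bsub>H\<^esub> \<in> Vb" unfolding Vb_def V0_def using bone2[OF x0] THc d by simp
      define Nx where "Nx = {x \<in> topspace TG. inv\<^bsub>G\<^esub> x0 \<otimes>\<^bsub>G\<^esub> x \<in> U1 \<inter> Ua}"
      define Ny where "Ny = {y \<in> topspace TH. inv\<^bsub>H\<^esub> y0 \<otimes>\<^bsub>H\<^esub> y \<in> V1 \<inter> Vb}"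
      have Nxo: "openin TG Nx"
        using left_transl_cont[OF tG G.inv_closed[OF x0]] UV1(1) Uao
        unfolding Nx_def continuous_map_def by blast
      have Nyo: "openin TH Ny"
        using left_transl_cont[OF tH H.inv_closed[OF y0]] UV1(2) Vbo
        unfolding Ny_def continuous_map_def by blast
      have x0N: "x0 \<in> Nx" unfolding Nx_def using x0 TGc UV1(3) \<open>\<one>\<^bsub>G\<^esub> \<in> Ua\<close> by simp
      have y0N: "y0 \<in> Ny" unfolding Ny_def using y0 THc UV1(4) \<open>\<one>\<^bsub>H\<^esub> \<in> Vb\<close> by simp
      have sub: "Nx \<times> Ny \<subseteq> ?S"
      proof
        fix q assume "q \<in> Nx \<times> Ny"
        then obtain x y where q: "q = (x, y)" and x: "x \<in> Nx" and y: "y \<in> Ny" by blast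
        define u where "u = inv\<^bsub>G\<^esub> x0 \<otimes>\<^bsub>G\<^esub> x"
        define v where "v = inv\<^bsub>H\<^esub> y0 \<otimes>\<^bsub>H\<^esub> y"
        have xc: "x \<in> carrier G" and yc: "y \<in> carrier H" using x y TGc THc Nx_def Ny_def by auto
        have uc: "u \<in> carrier G" and vc: "v \<in> carrier H" using xc yc x0 y0 u_def v_def by auto
        have xu: "x = x0 \<otimes>\<^bsub>G\<^esub> u" unfolding u_def using xc x0
          by (simp add: G.m_assoc[symmetric])
        have yv: "y = y0 \<otimes>\<^bsub>H\<^esub> v" unfolding v_def using yc y0
          by (simp add: H.m_assoc[symmetric])
        have uU: "u \<in> U1" "u \<in> Ua" and vV: "v \<in> V1" "v \<in> Vb"
          using x y unfolding u_def v_def Nx_def Ny_def by auto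
        have "(u, v) \<in> U0" using uU vV UV1(5) by auto
        then have buv: "b u v \<in> V0" using U0(3) by auto
        have buy: "b u y0 \<in> V0" using uU Ua_def by auto
        have bxv: "b x0 v \<in> V0" using vV Vb_def by auto
        have "b x y = b x0 y0 * (b x0 v * b u y0 * b u v)"
          using xu yv x0 y0 uc vc by (simp add: bml bmr mult_ac)
        then have "dist (b x y) (b x0 y0) = norm (b x0 y0 * (b x0 v * b u y0 * b u v - 1))"
          by (simp add: dist_norm algebra_simps)
        also have "\<dots> = norm (b x0 v * b u y0 * b u v - 1)"
          using bs[OF x0 y0] by (simp add: norm_mult)
        also have "\<dots> \<le> norm (b x0 v - 1) + norm (b u y0 - 1) + norm (b u v - 1)"
          by (rule unit3) (use bs x0 y0 uc vc in auto)
        also have "\<dots> < d + d + d"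
          using buv buy bxv by (intro add_strict_mono) (auto simp: V0_def dist_norm norm_minus_commute)
        also have "\<dots> = e" by (simp add: d_def)
        finally have "b x y \<in> ball (b x0 y0) e" by (simp add: dist_commute)
        then have "b x y \<in> W" using e T bs[OF xc yc] by auto
        then show "q \<in> ?S" using xc yc TGc THc q by auto
      qed
      show "\<exists>T. openin (prod_topology TG TH) T \<and> p \<in> T \<and> T \<subseteq> ?S"
        using Nxo Nyo x0N y0N sub p0 by (intro exI[of _ "Nx \<times> Ny"]) (auto simp: openin_prod_Times_iff)
    qed
  qed
qed



lemma pullback_top_ab:
  fixes A :: "'x monoid" and L :: "'y monoid"
  assumes A: "comm_group A" and L: "top_ab_group L TL" and phi: "\<phi> \<in> hom A L"
  shows "top_ab_group A (pullback_topology (carrier A) \<phi> TL)"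
proof -
  interpret A: comm_group A by (rule A)
  interpret L: comm_group L using top_ab_D[OF L] by simp
  note LD = top_ab_D[OF L]
  define P where "P = pullback_topology (carrier A) \<phi> TL"
  have tP: "topspace P = carrier A"
    unfolding P_def topspace_pullback_topology using phi LD(3) by (auto simp: hom_def)
  have phic: "continuous_map P TL \<phi>"
    using continuous_map_pullback[OF continuous_map_id, of "carrier A" \<phi> TL] by (simp add: P_def)
  have c1: "continuous_map (prod_topology P P) (prod_topology TL TL) (\<lambda>p. (\<phi> (fst p), \<phi> (snd p)))"
    unfolding continuous_map_pairwise o_def
    using continuous_map_compose[OF continuous_map_fst phic] continuous_map_compose[OF continuous_map_snd phic]
    unfolding o_def fst_conv snd_conv by blast
  have "continuous_map (prod_topology P P) TL ((\<lambda>(x, y). x \<otimes>\<^bsub>L\<^esub> y) \<circ> (\<lambda>p. (\<phi> (fst p), \<phi> (snd p))))"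
    by (rule continuous_map_compose[OF c1 LD(4)])
  then have cm: "continuous_map (prod_topology P P) TL (\<phi> \<circ> (\<lambda>(x, y). x \<otimes>\<^bsub>A\<^esub> y))"
    by (rule continuous_map_eq) (use phi tP in \<open>auto simp: hom_mult\<close>)
  have "continuous_map (prod_topology P P) (pullback_topology (carrier A) \<phi> TL) (\<lambda>(x, y). x \<otimes>\<^bsub>A\<^esub> y)"
    by (rule continuous_map_pullback'[OF cm]) (use tP in auto)
  then have "continuous_map (prod_topology P P) P (\<lambda>(x, y). x \<otimes>\<^bsub>A\<^esub> y)"
    by (simp add: P_def)
  moreover
  have gh: "group_hom A L \<phi>" using phi
    by (simp add: group_hom_def group_hom_axioms_def A.group_axioms L.group_axioms)
  have "continuous_map P TL ((\<lambda>x. inv\<^bsub>L\<^esub> x) \<circ> \<phi>)"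
    by (rule continuous_map_compose[OF phic LD(5)])
  then have ci: "continuous_map P TL (\<phi> \<circ> (\<lambda>x. inv\<^bsub>A\<^esub> x))"
    by (rule continuous_map_eq) (use gh tP in \<open>auto simp: group_hom.hom_inv\<close>)
  have "continuous_map P (pullback_topology (carrier A) \<phi> TL) (\<lambda>x. inv\<^bsub>A\<^esub> x)"
    by (rule continuous_map_pullback'[OF ci]) (use tP in auto)
  then have "continuous_map P P (\<lambda>x. inv\<^bsub>A\<^esub> x)"
    by (simp add: P_def)
  ultimately show ?thesis
    unfolding top_ab_group_def P_def[symmetric] using tP A by simp
qed

definition famT :: "'a topology \<Rightarrow> ('a \<Rightarrow>\<^sub>0 int) set set" where
  "famT X = \<Union> {{U. openin T U} | T. top_ab_group (free_Abelian_group (topspace X)) T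
                              \<and> continuous_map X T frag_of}"

lemma free_top_famT: "free_top_ab_topology X = topology_generated_by (famT X)"
  by (simp add: free_top_ab_topology_def famT_def)

lemma famT_I:
  assumes "top_ab_group (free_Abelian_group (topspace X)) T" "continuous_map X T frag_of" "openin T U"
  shows "U \<in> famT X"
  using assms unfolding famT_def by blast

lemma famT_sub: "U \<in> famT X \<Longrightarrow> U \<subseteq> carrier (free_Abelian_group (topspace X))"
  unfolding famT_def using openin_subset top_ab_D(3) by fastforce

lemma indiscrete_in_famT:
  "carrier (free_Abelian_group (topspace X)) \<in> famT X"
proof -
  let ?A = "free_Abelian_group (topspace X)"
  let ?P = "pullback_topology (carrier ?A) (\<lambda>_. 1::complex) circle_top"
  have h: "(\<lambda>_. 1::complex) \<in> hom ?A circle_group"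
    by (rule trivial_hom[OF circle_group, simplified])
  have t: "top_ab_group ?A ?P"
    by (rule pullback_top_ab[OF abelian_free_Abelian_group circle_top_ab h])
  have tP: "topspace ?P = carrier ?A" by (simp add: topspace_pullback_topology)
  have c: "continuous_map X ?P frag_of"
    by (rule continuous_map_pullback') (auto simp: o_def)
  show ?thesis
    by (rule famT_I[OF t c]) (metis openin_topspace tP)
qed

lemma topspace_free_top: "topspace (free_top_ab_topology X) = carrier (free_Abelian_group (topspace X))"
  unfolding free_top_famT topology_generated_by_topspace
  using famT_sub indiscrete_in_famT by blast

lemma famT_open:
  assumes "top_ab_group (free_Abelian_group (topspace X)) T" "continuous_map X T frag_of" "openin T U"
  shows "openin (free_top_ab_topology X) U"
  unfolding free_top_famT by (rule topology_generated_by_Basis[OF famT_I[OF assms]])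

lemma frag_of_cont: "continuous_map X (free_top_ab_topology X) frag_of"
  unfolding free_top_famT continuous_on_generated_topo_iff
proof (intro conjI allI impI)
  fix U assume "U \<in> famT X"
  then obtain T where T: "top_ab_group (free_Abelian_group (topspace X)) T"
    "continuous_map X T frag_of" "openin T U"
    unfolding famT_def by blast
  then show "openin X (frag_of -` U \<inter> topspace X)"
    using continuous_map_def[of X T frag_of] by (simp add: Int_commute vimage_def Collect_conj_eq Collect_mem_eq) 
next
  show "frag_of ` topspace X \<subseteq> \<Union> (famT X)"
    using indiscrete_in_famT[of X] by auto
qed

lemma cont_bihom_from_joint:
  assumes tG: "topspace TG = carrier G" and tH: "topspace TH = carrier H"
    and gG: "group G" and gH: "group H"
    and j: "continuous_map (prod_topology TG TH) TL (\<lambda>(x, y). \<beta> x y)"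
    and h1: "\<And>x. x \<in> carrier G \<Longrightarrow> \<beta> x \<in> hom H L"
    and h2: "\<And>y. y \<in> carrier H \<Longrightarrow> (\<lambda>x. \<beta> x y) \<in> hom G L"
  shows "cont_bihom G TG H TH L TL \<beta>"
  unfolding cont_bihom_def
proof (intro conjI ballI allI impI)
  fix x assume x: "x \<in> carrier G"
  show "\<beta> x \<in> hom H L" by (rule h1[OF x])
  have "continuous_map TH (prod_topology TG TH) (\<lambda>y. (x, y))"
    using x tG by (auto simp: continuous_map_pairwise o_def)
  from continuous_map_compose[OF this j] show "continuous_map TH TL (\<beta> x)" by (simp add: o_def)
next
  fix y assume y: "y \<in> carrier H"
  show "(\<lambda>x. \<beta> x y) \<in> hom G L" by (rule h2[OF y])
  have "continuous_map TG (prod_topology TG TH) (\<lambda>x. (x, y))"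
    using y tH by (auto simp: continuous_map_pairwise o_def)
  from continuous_map_compose[OF this j] show "continuous_map TG TL (\<lambda>x. \<beta> x y)" by (simp add: o_def)
next
  fix V assume V: "openin TL V \<and> \<beta> \<one>\<^bsub>G\<^esub> \<one>\<^bsub>H\<^esub> \<in> V"
  define U where "U = {p \<in> topspace (prod_topology TG TH). (\<lambda>(x, y). \<beta> x y) p \<in> V}"
  have "openin (prod_topology TG TH) U" using j V unfolding U_def continuous_map_def by blast
  moreover have "(\<one>\<^bsub>G\<^esub>, \<one>\<^bsub>H\<^esub>) \<in> U" using V tG tH gG gH unfolding U_def
    by (simp add: group.is_monoid monoid.one_closed)
  moreover have "\<forall>(x, y)\<in>U. \<beta> x y \<in> V" unfolding U_def by auto
  ultimately show "\<exists>U. openin (prod_topology TG TH) U \<and> (\<one>\<^bsub>G\<^esub>, \<one>\<^bsub>H\<^esub>) \<in> U \<and> (\<forall>(x, y)\<in>U. \<beta> x y \<in> V)"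
    by blast
qed



lemma qtop_istopology:
  fixes A :: "'x monoid"
  assumes gA: "group A" and sN: "subgroup N A"
  shows "istopology (\<lambda>U. U \<subseteq> carrier (A Mod N) \<and> openin TA (\<Union>U))"
proof -
  have dj: "disjoint (rcosets\<^bsub>A\<^esub> N)" by (rule group.rcos_disjoint[OF gA sN])
  have I: "U \<inter> V \<subseteq> carrier (A Mod N) \<and> openin TA (\<Union>(U \<inter> V))"
    if U: "U \<subseteq> carrier (A Mod N) \<and> openin TA (\<Union>U)"
    and V: "V \<subseteq> carrier (A Mod N) \<and> openin TA (\<Union>V)" for U V
  proof -
    have "\<Union>(U \<inter> V) = \<Union>U \<inter> \<Union>V"
    proof
      show "\<Union>(U \<inter> V) \<subseteq> \<Union>U \<inter> \<Union>V" by auto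
      show "\<Union>U \<inter> \<Union>V \<subseteq> \<Union>(U \<inter> V)"
      proof
        fix a assume "a \<in> \<Union>U \<inter> \<Union>V"
        then obtain C D where CD: "C \<in> U" "D \<in> V" "a \<in> C" "a \<in> D" by blast
        have "C \<in> rcosets\<^bsub>A\<^esub> N" "D \<in> rcosets\<^bsub>A\<^esub> N" using CD U V by (auto simp: FactGroup_def)
        then have "C = D" using dj CD unfolding disjoint_def disjnt_def by blast
        then show "a \<in> \<Union>(U \<inter> V)" using CD by blast
      qed
    qed
    then show ?thesis using U V by auto
  qed
  have UU: "\<Union>K \<subseteq> carrier (A Mod N) \<and> openin TA (\<Union>(\<Union>K))"
    if K: "\<forall>U\<in>K. U \<subseteq> carrier (A Mod N) \<and> openin TA (\<Union>U)" for K
  proof -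
    have "\<Union>(\<Union>K) = \<Union>((\<lambda>U. \<Union>U) ` K)" by auto
    then show ?thesis using K by auto
  qed
  show ?thesis unfolding istopology_def using I UU by blast
qed

lemma hom_diff_circle:
  assumes h: "h \<in> hom (free_Abelian_group S) circle_group"
    and u: "u \<in> carrier (free_Abelian_group S)" and v: "v \<in> carrier (free_Abelian_group S)"
  shows "h (u - v) = h u * inverse (h v)"
proof -
  interpret A: comm_group "free_Abelian_group S" by (rule abelian_free_Abelian_group)
  interpret C: comm_group circle_group by (rule circle_comm_group)
  have gh: "group_hom (free_Abelian_group S) circle_group h"
    using h by (simp add: group_hom_def group_hom_axioms_def A.group_axioms C.group_axioms)
  have iv: "inv\<^bsub>free_Abelian_group S\<^esub> v \<in> carrier (free_Abelian_group S)" using v by (rule A.inv_closed)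
  have eq: "u - v = u \<otimes>\<^bsub>free_Abelian_group S\<^esub> inv\<^bsub>free_Abelian_group S\<^esub> v"
    using v by simp
  have "h (u - v) = h (u \<otimes>\<^bsub>free_Abelian_group S\<^esub> inv\<^bsub>free_Abelian_group S\<^esub> v)"
    by (simp only: eq)
  also have "\<dots> = h u \<otimes>\<^bsub>circle_group\<^esub> h (inv\<^bsub>free_Abelian_group S\<^esub> v)"
    by (rule hom_mult[OF h u iv])
  also have "\<dots> = h u * h (inv\<^bsub>free_Abelian_group S\<^esub> v)" by (simp only: circle_mult)
  finally have "h (u - v) = h u * h (inv\<^bsub>free_Abelian_group S\<^esub> v)" .
  also have "h (inv\<^bsub>free_Abelian_group S\<^esub> v) = inv\<^bsub>circle_group\<^esub> (h v)"
    using group_hom.hom_inv[OF gh v] .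
  also have "\<dots> = inverse (h v)" using hom_in_carrier[OF h v] by simp
  finally show ?thesis .
qed

lemma hom_add_circle:
  assumes h: "h \<in> hom (free_Abelian_group S) circle_group"
    and u: "u \<in> carrier (free_Abelian_group S)" and v: "v \<in> carrier (free_Abelian_group S)"
  shows "h (u + v) = h u * h v"
  using hom_mult[OF h u v] by simp



lemma part1:
  fixes G :: "'a monoid" and TG :: "'a topology"
    and H :: "'b monoid" and TH :: "'b topology"
  assumes cG: "class_Q G TG" and cH: "class_Q H TH"
  shows "dual_group (tensor_group G H) (tensor_top G TG H TH) \<cong> bichar_group G TG H TH"
proof -
  note Gd = class_Q_D[OF cG] and Hd = class_Q_D[OF cH]
  interpret G: comm_group G by (rule Gd(1))
  interpret H: comm_group H by (rule Hd(1))
  interpret C: comm_group circle_group by (rule circle_comm_group)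
  define S where "S = carrier G \<times> carrier H"
  define X where "X = prod_topology TG TH"
  have tX: "topspace X = S" unfolding X_def S_def using Gd(3) Hd(3) by simp
  define A where "A = free_Abelian_group S"
  have A_eq: "tensor_A G H = A" by (simp add: tensor_A_def A_def S_def)
  have FX: "free_Abelian_group (topspace X) = A" by (simp add: tX A_def)
  interpret A: comm_group A unfolding A_def by (rule abelian_free_Abelian_group)
  define TA where "TA = free_top_ab_topology X"
  have tTA: "topspace TA = carrier A" unfolding TA_def using topspace_free_top[of X] FX by simp
  define gens where "gens = {frag_of (a \<otimes>\<^bsub>G\<^esub> a', c) - frag_of (a, c) - frag_of (a', c) | a a' c.
         a \<in> carrier G \<and> a' \<in> carrier G \<and> c \<in> carrier H} \<union>
      {frag_of (a, c \<otimes>\<^bsub>H\<^esub> c') - frag_of (a, c) - frag_of (a, c') | a c c'.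
         a \<in> carrier G \<and> c \<in> carrier H \<and> c' \<in> carrier H}"
  define N where "N = generate A gens"
  have N_eq: "tensor_N G H = N" by (simp add: tensor_N_def N_def gens_def A_eq)
  have fcar: "frag_of p \<in> carrier A" if "p \<in> S" for p using that by (simp add: A_def)
  have dcar: "u - v \<in> carrier A" if "u \<in> carrier A" "v \<in> carrier A" for u v
    using that keys_diff[of u v] unfolding A_def by auto
  have gens_sub: "gens \<subseteq> carrier A"
    unfolding gens_def S_def using fcar dcar S_def by auto
  have sN: "subgroup N A" unfolding N_def by (rule A.generate_is_subgroup[OF gens_sub])
  have nN: "N \<lhd> A" using sN A.normal_iff_subgroup by simp
  interpret N: normal N A by (rule nN)
  have gM: "group (A Mod N)" by (rule N.factorgroup_is_group)
  have TG_eq: "tensor_group G H = A Mod N" by (simp add: tensor_group_def A_eq N_eq)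
  define TT where "TT = tensor_top G TG H TH"
  have openTT: "openin TT U \<longleftrightarrow> U \<subseteq> carrier (A Mod N) \<and> openin TA (\<Union>U)" for U
  proof -
    have "TT = topology (\<lambda>U. U \<subseteq> carrier (A Mod N) \<and> openin TA (\<Union>U))"
      by (simp add: TT_def tensor_top_def TG_eq TA_def X_def)
    then show ?thesis using qtop_istopology[OF A.is_group sN, of TA] by simp
  qed
  have carM: "carrier (A Mod N) = rcosets\<^bsub>A\<^esub> N" by (simp add: FactGroup_def)
  have tTT: "topspace TT = carrier (A Mod N)"
  proof -
    have "\<Union>(rcosets\<^bsub>A\<^esub> N) = carrier A" by (rule A.rcosets_part_G[OF sN])
    then have "openin TT (carrier (A Mod N))" using openTT carM tTA by (metis openin_topspace order_refl)
    then show ?thesis using openin_subset openTT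
      by (metis openin_topspace subset_antisym)
  qed
  have Nsub: "N \<subseteq> carrier A" using sN by (rule subgroup.subset)
  have qcar: "N #>\<^bsub>A\<^esub> a \<in> carrier (A Mod N)" if "a \<in> carrier A" for a
    using A.rcosetsI[OF Nsub that] carM by simp
  have cosrep: "\<exists>c \<in> carrier A. C = N #>\<^bsub>A\<^esub> c" if "C \<in> carrier (A Mod N)" for C
    using that carM unfolding RCOSETS_def by auto
  have cos_eq: "N #>\<^bsub>A\<^esub> a = N #>\<^bsub>A\<^esub> c" if "a \<in> N #>\<^bsub>A\<^esub> c" "c \<in> carrier A" for a c
    using A.repr_independence[OF that sN] by simp
  have cos_car: "a \<in> carrier A" if "a \<in> N #>\<^bsub>A\<^esub> c" "c \<in> carrier A" for a c
    using subgroup.elemrcos_carrier[OF sN A.is_group that(2,1)] .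
  have qUnion: "{a \<in> carrier A. N #>\<^bsub>A\<^esub> a \<in> U} = \<Union>U" if U: "U \<subseteq> carrier (A Mod N)" for U
  proof
    show "{a \<in> carrier A. N #>\<^bsub>A\<^esub> a \<in> U} \<subseteq> \<Union>U" using A.rcos_self[OF _ sN] by blast
    show "\<Union>U \<subseteq> {a \<in> carrier A. N #>\<^bsub>A\<^esub> a \<in> U}"
    proof
      fix a assume "a \<in> \<Union>U"
      then obtain C where C: "C \<in> U" "a \<in> C" by blast
      then obtain c where c: "c \<in> carrier A" "C = N #>\<^bsub>A\<^esub> c" using cosrep U by blast
      have "a \<in> carrier A" using cos_car C c by blast
      moreover have "N #>\<^bsub>A\<^esub> a = C" using cos_eq C c by blast
      ultimately show "a \<in> {a \<in> carrier A. N #>\<^bsub>A\<^esub> a \<in> U}" using C by simp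
    qed
  qed
  have qcont: "continuous_map TA TT (\<lambda>a. N #>\<^bsub>A\<^esub> a)"
    unfolding continuous_map_def
  proof (intro conjI allI impI)
    show "(\<lambda>a. N #>\<^bsub>A\<^esub> a) \<in> topspace TA \<rightarrow> topspace TT" using qcar tTA tTT by auto
    fix U assume "openin TT U"
    then have U: "U \<subseteq> carrier (A Mod N)" "openin TA (\<Union>U)" using openTT by auto
    then show "openin TA {x \<in> topspace TA. N #>\<^bsub>A\<^esub> x \<in> U}" using qUnion tTA by simp
  qed
  have fcont: "continuous_map X TA frag_of" unfolding TA_def by (rule frag_of_cont)
  have tmap: "tensor_map G H x y = N #>\<^bsub>A\<^esub> frag_of (x, y)" for x y
    by (simp add: tensor_map_def N_eq A_eq)
  define \<Phi> where "\<Phi> = (\<lambda>ch::('a \<times> 'b \<Rightarrow>\<^sub>0 int) set \<Rightarrow> complex. \<lambda>x\<in>carrier G. \<lambda>y\<in>carrier H. ch (tensor_map G H x y))"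
  have psi: "(\<lambda>a. ch (N #>\<^bsub>A\<^esub> a)) \<in> hom A circle_group"
    "\<And>n. n \<in> N \<Longrightarrow> ch (N #>\<^bsub>A\<^esub> n) = 1"
    "continuous_map TA circle_top (\<lambda>a. ch (N #>\<^bsub>A\<^esub> a))"
    if chi: "ch \<in> characters (A Mod N) TT" for ch
  proof -
    have ch: "ch \<in> hom (A Mod N) circle_group" "continuous_map TT circle_top ch"
      using chi by (auto simp: characters_def)
    have "ch \<circ> (\<lambda>a. N #>\<^bsub>A\<^esub> a) \<in> hom A circle_group"
      by (rule hom_compose[OF N.r_coset_hom_Mod ch(1)])
    then show "(\<lambda>a. ch (N #>\<^bsub>A\<^esub> a)) \<in> hom A circle_group" by (simp add: o_def)
    have "continuous_map TA circle_top (ch \<circ> (\<lambda>a. N #>\<^bsub>A\<^esub> a))"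
      by (rule continuous_map_compose[OF qcont ch(2)])
    then show "continuous_map TA circle_top (\<lambda>a. ch (N #>\<^bsub>A\<^esub> a))" by (simp add: o_def)
    have gh: "group_hom (A Mod N) circle_group ch"
      using ch(1) gM by (simp add: group_hom_def group_hom_axioms_def C.group_axioms)
    fix n assume n: "n \<in> N"
    have "N #>\<^bsub>A\<^esub> n = N" using subgroup.rcos_const[OF sN A.is_group n] .
    then show "ch (N #>\<^bsub>A\<^esub> n) = 1" using group_hom.hom_one[OF gh] by simp
  qed
  have Phi_car: "\<Phi> ch \<in> carrier (bichar_group G TG H TH)" if chi: "ch \<in> characters (A Mod N) TT" for ch
  proof -
    define \<psi> where "\<psi> = (\<lambda>a. ch (N #>\<^bsub>A\<^esub> a))"
    have ph: "\<psi> \<in> hom A circle_group" and pN: "\<And>n. n \<in> N \<Longrightarrow> \<psi> n = 1"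
      and pc: "continuous_map TA circle_top \<psi>"
      using psi[OF chi] unfolding \<psi>_def by auto
    have ph': "\<psi> \<in> hom (free_Abelian_group S) circle_group" using ph by (simp add: A_def)
    have psph: "\<psi> (frag_of p) \<in> sphere 0 1" if "p \<in> S" for p
      using hom_in_carrier[OF ph fcar[OF that]] by simp
    have gN: "g \<in> N" if "g \<in> gens" for g
      using that unfolding N_def by (rule generate.incl)
    have key: "\<psi> f1 = \<psi> f2 * \<psi> f3" if "f1 - f2 - f3 \<in> N" "f1 \<in> carrier A" "f2 \<in> carrier A" "f3 \<in> carrier A"
      and nz: "\<psi> f2 \<noteq> 0" "\<psi> f3 \<noteq> 0" for f1 f2 f3
    proof -
      have "1 = \<psi> (f1 - f2 - f3)" using pN that(1) by simp
      also have "\<dots> = \<psi> f1 * inverse (\<psi> f2) * inverse (\<psi> f3)"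
        using hom_diff_circle[OF ph'] that(2-4) dcar by (simp add: A_def)
      finally show ?thesis using nz by (simp add: field_simps)
    qed
    define \<beta> where "\<beta> = (\<lambda>x y. \<psi> (frag_of (x, y)))"
    have jc: "continuous_map X circle_top (\<lambda>(x, y). \<beta> x y)"
    proof -
      have "continuous_map X circle_top (\<psi> \<circ> frag_of)"
        by (rule continuous_map_compose[OF fcont pc])
      then show ?thesis by (simp add: \<beta>_def o_def case_prod_unfold)
    qed
    have nz: "\<psi> (frag_of p) \<noteq> 0" if "p \<in> S" for p using psph[OF that] by auto
    have cb: "cont_bihom G TG H TH circle_group circle_top \<beta>"
    proof (rule cont_bihom_from_joint[OF Gd(3) Hd(3) G.is_group H.is_group])
      show "continuous_map (prod_topology TG TH) circle_top (\<lambda>(x, y). \<beta> x y)" using jc X_def by simp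
      fix x assume x: "x \<in> carrier G"
      show "\<beta> x \<in> hom H circle_group"
      proof (rule homI)
        fix y assume "y \<in> carrier H" then show "\<beta> x y \<in> carrier circle_group"
          using psph x S_def \<beta>_def by simp
      next
        fix y y' assume y: "y \<in> carrier H" "y' \<in> carrier H"
        have "\<beta> x (y \<otimes>\<^bsub>H\<^esub> y') = \<beta> x y * \<beta> x y'"
          unfolding \<beta>_def
          by (rule key) (use x y in \<open>auto intro!: gN fcar nz simp: gens_def S_def\<close>)
        then show "\<beta> x (y \<otimes>\<^bsub>H\<^esub> y') = \<beta> x y \<otimes>\<^bsub>circle_group\<^esub> \<beta> x y'" by simp
      qed
    next
      fix y assume y: "y \<in> carrier H"
      show "(\<lambda>x. \<beta> x y) \<in> hom G circle_group"
      proof (rule homI)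
        fix x assume "x \<in> carrier G" then show "\<beta> x y \<in> carrier circle_group"
          using psph y S_def \<beta>_def by simp
      next
        fix x x' assume x: "x \<in> carrier G" "x' \<in> carrier G"
        have gg: "frag_of (x \<otimes>\<^bsub>G\<^esub> x', y) - frag_of (x, y) - frag_of (x', y) \<in> gens"
          unfolding gens_def using x y by blast
        have "\<beta> (x \<otimes>\<^bsub>G\<^esub> x') y = \<beta> x y * \<beta> x' y"
          unfolding \<beta>_def
          by (rule key[OF gN[OF gg]]) (use x y in \<open>auto intro!: fcar nz simp: S_def\<close>)
        then show "\<beta> (x \<otimes>\<^bsub>G\<^esub> x') y = \<beta> x y \<otimes>\<^bsub>circle_group\<^esub> \<beta> x' y" by simp
      qed
    qed
    have "cont_bihom G TG H TH circle_group circle_top (\<Phi> ch)"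
      by (rule cont_bihom_cong[OF Gd(3) Hd(3) G.is_group H.is_group _ cb])
         (simp add: \<Phi>_def \<beta>_def \<psi>_def tmap)
    then show ?thesis by (simp add: bichar_group_def \<Phi>_def)
  qed
  have D: "dual_group (tensor_group G H) (tensor_top G TG H TH) = dual_group (A Mod N) TT"
    by (simp add: TG_eq TT_def)
  have dcarr: "carrier (dual_group (A Mod N) TT) = characters (A Mod N) TT"
    by (simp add: dual_group_def)
  have tmc: "tensor_map G H x y \<in> carrier (A Mod N)" if "x \<in> carrier G" "y \<in> carrier H" for x y
    using that by (simp add: tmap qcar fcar S_def)
  have "\<Phi> \<in> iso (dual_group (A Mod N) TT) (bichar_group G TG H TH)"
    unfolding iso_iff
  proof (intro conjI)
    show "\<Phi> \<in> hom (dual_group (A Mod N) TT) (bichar_group G TG H TH)"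
    proof (rule homI)
      fix ch assume "ch \<in> carrier (dual_group (A Mod N) TT)"
      then show "\<Phi> ch \<in> carrier (bichar_group G TG H TH)" using Phi_car dcarr by simp
    next
      fix ch ch' assume "ch \<in> carrier (dual_group (A Mod N) TT)" "ch' \<in> carrier (dual_group (A Mod N) TT)"
      show "\<Phi> (ch \<otimes>\<^bsub>dual_group (A Mod N) TT\<^esub> ch') = \<Phi> ch \<otimes>\<^bsub>bichar_group G TG H TH\<^esub> \<Phi> ch'"
        by (auto simp: \<Phi>_def dual_group_def bichar_group_def fun_eq_iff tmc)
    qed
    show "inj_on \<Phi> (carrier (dual_group (A Mod N) TT))"
    proof (rule inj_onI)
      fix ch1 ch2 assume c1: "ch1 \<in> carrier (dual_group (A Mod N) TT)"
        and c2: "ch2 \<in> carrier (dual_group (A Mod N) TT)" and eq: "\<Phi> ch1 = \<Phi> ch2"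
      have ch1: "ch1 \<in> characters (A Mod N) TT" and ch2: "ch2 \<in> characters (A Mod N) TT"
        using c1 c2 dcarr by auto
      define \<psi>1 where "\<psi>1 = (\<lambda>a. ch1 (N #>\<^bsub>A\<^esub> a))"
      define \<psi>2 where "\<psi>2 = (\<lambda>a. ch2 (N #>\<^bsub>A\<^esub> a))"
      have h1: "\<psi>1 \<in> hom (free_Abelian_group S) circle_group"
        using psi(1)[OF ch1] by (simp add: \<psi>1_def A_def)
      have h2: "\<psi>2 \<in> hom (free_Abelian_group S) circle_group"
        using psi(1)[OF ch2] by (simp add: \<psi>2_def A_def)
      have gens_eq: "\<psi>1 (frag_of p) = \<psi>2 (frag_of p)" if pS: "p \<in> S" for p
      proof -
        obtain x y where p: "p = (x, y)" "x \<in> carrier G" "y \<in> carrier H" using pS S_def by auto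
        have "\<Phi> ch1 x y = \<Phi> ch2 x y" using eq by simp
        then show ?thesis using p by (simp add: \<Phi>_def \<psi>1_def \<psi>2_def tmap)
      qed
      have gh1: "group_hom (free_Abelian_group S) circle_group \<psi>1"
        using h1 by (simp add: group_hom_def group_hom_axioms_def C.group_axioms)
      have gh2: "group_hom (free_Abelian_group S) circle_group \<psi>2"
        using h2 by (simp add: group_hom_def group_hom_axioms_def C.group_axioms)
      have all_eq: "\<psi>1 a = \<psi>2 a" if "a \<in> carrier A" for a
      proof -
        have ka: "Poly_Mapping.keys a \<subseteq> S" using that by (simp add: A_def)
        show ?thesis
        proof (rule free_Abelian_group_induct[where P = "\<lambda>a. \<psi>1 a = \<psi>2 a", OF ka])
          show "\<psi>1 0 = \<psi>2 0" using group_hom.hom_one[OF gh1] group_hom.hom_one[OF gh2] by simp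
        next
          fix u v assume uv: "Poly_Mapping.keys u \<subseteq> S" "Poly_Mapping.keys v \<subseteq> S" "\<psi>1 u = \<psi>2 u" "\<psi>1 v = \<psi>2 v"
          then show "\<psi>1 (u - v) = \<psi>2 (u - v)"
            using hom_diff_circle[OF h1, of u v] hom_diff_circle[OF h2, of u v] by simp
        next
          fix p assume "p \<in> S"
          then show "\<psi>1 (frag_of p) = \<psi>2 (frag_of p)" by (rule gens_eq)
        qed
      qed
      show "ch1 = ch2"
      proof (rule ext)
        fix C show "ch1 C = ch2 C"
        proof (cases "C \<in> carrier (A Mod N)")
          case True
          then obtain c where "c \<in> carrier A" "C = N #>\<^bsub>A\<^esub> c" using cosrep by blast
          then show ?thesis using all_eq unfolding \<psi>1_def \<psi>2_def by simp
        next
          case False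
          then show ?thesis using ch1 ch2 by (simp add: characters_def extensional_def)
        qed
      qed
    qed
    show "\<Phi> ` carrier (dual_group (A Mod N) TT) = carrier (bichar_group G TG H TH)"
    proof
      show "\<Phi> ` carrier (dual_group (A Mod N) TT) \<subseteq> carrier (bichar_group G TG H TH)"
        using Phi_car dcarr by auto
      show "carrier (bichar_group G TG H TH) \<subseteq> \<Phi> ` carrier (dual_group (A Mod N) TT)"
      proof
        fix b assume b: "b \<in> carrier (bichar_group G TG H TH)"
        then have bb: "cont_bihom G TG H TH circle_group circle_top b"
          and be: "b \<in> extensional (carrier G)" "\<forall>x \<in> carrier G. b x \<in> extensional (carrier H)"
          by (auto simp: bichar_group_def)
        have bx: "b x \<in> hom H circle_group" if "x \<in> carrier G" for x
          using bb that unfolding cont_bihom_def by auto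
        have by': "(\<lambda>x. b x y) \<in> hom G circle_group" if "y \<in> carrier H" for y
          using bb that unfolding cont_bihom_def by auto
        have bs: "b x y \<in> sphere 0 1" if "x \<in> carrier G" "y \<in> carrier H" for x y
          using hom_in_carrier[OF bx[OF that(1)] that(2)] by simp
        have "(\<lambda>(x, y). b x y) ` S \<subseteq> carrier circle_group" using bs S_def by auto
        then obtain h where h: "h \<in> hom (free_Abelian_group S) circle_group"
          and hf: "\<And>p. p \<in> S \<Longrightarrow> h (frag_of p) = (\<lambda>(x, y). b x y) p"
          using C.free_Abelian_group_universal by metis
        have hA: "h \<in> hom A circle_group" using h by (simp add: A_def)
        have ghA: "group_hom A circle_group h"
          using hA by (simp add: group_hom_def group_hom_axioms_def C.group_axioms A.group_axioms)
        have hfrag: "h (frag_of (x, y)) = b x y" if "x \<in> carrier G" "y \<in> carrier H" for x y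
          using hf[of "(x, y)"] that S_def by simp
        have hdiff: "h (f1 - f2 - f3) = h f1 * inverse (h f2) * inverse (h f3)"
          if "f1 \<in> carrier A" "f2 \<in> carrier A" "f3 \<in> carrier A" for f1 f2 f3
          using hom_diff_circle[OF h] that dcar by (simp add: A_def)
        have gens_ker: "gens \<subseteq> kernel A circle_group h"
        proof
          fix g assume g: "g \<in> gens"
          have "g \<in> carrier A" using g gens_sub by auto
          moreover have "h g = 1"
          proof -
            { fix a a' c assume abc: "a \<in> carrier G" "a' \<in> carrier G" "c \<in> carrier H"
                and gdef: "g = frag_of (a \<otimes>\<^bsub>G\<^esub> a', c) - frag_of (a, c) - frag_of (a', c)"
              have "h g = b (a \<otimes>\<^bsub>G\<^esub> a') c * inverse (b a c) * inverse (b a' c)"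
                using abc gdef hdiff hfrag fcar S_def by simp
              also have "b (a \<otimes>\<^bsub>G\<^esub> a') c = b a c * b a' c"
                using hom_mult[OF by'[OF abc(3)] abc(1,2)] by simp
              finally have "h g = 1" using bs[OF abc(1) abc(3)] bs[OF abc(2) abc(3)] by (auto simp: field_simps)
            }
            moreover
            { fix a c c' assume abc: "a \<in> carrier G" "c \<in> carrier H" "c' \<in> carrier H"
                and gdef: "g = frag_of (a, c \<otimes>\<^bsub>H\<^esub> c') - frag_of (a, c) - frag_of (a, c')"
              have "h g = b a (c \<otimes>\<^bsub>H\<^esub> c') * inverse (b a c) * inverse (b a c')"
                using abc gdef hdiff hfrag fcar S_def by simp
              also have "b a (c \<otimes>\<^bsub>H\<^esub> c') = b a c * b a c'"
                using hom_mult[OF bx[OF abc(1)] abc(2,3)] by simp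
              finally have "h g = 1" using bs[OF abc(1) abc(2)] bs[OF abc(1) abc(3)] by (auto simp: field_simps)
            }
            ultimately show ?thesis using g unfolding gens_def by blast
          qed
          ultimately show "g \<in> kernel A circle_group h" by (simp add: kernel_def)
        qed
        have Nker: "N \<subseteq> kernel A circle_group h"
          unfolding N_def
          by (rule A.generate_subgroup_incl[OF gens_ker group_hom.subgroup_kernel[OF ghA]])
        have hN: "h n = 1" if "n \<in> N" for n using Nker that by (auto simp: kernel_def)
        have hcos: "h a' = h a" if aa: "a \<in> carrier A" "a' \<in> N #>\<^bsub>A\<^esub> a" for a a'
        proof -
          obtain n where n: "n \<in> N" "a' = n \<otimes>\<^bsub>A\<^esub> a" using aa(2) unfolding r_coset_def by blast
          have "h a' = h n * h a" using n hom_mult[OF hA] Nsub aa(1) by auto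
          then show ?thesis using hN[OF n(1)] by simp
        qed
        define ch where "ch = (\<lambda>C\<in>carrier (A Mod N). h (SOME a. a \<in> C))"
        have chq: "ch (N #>\<^bsub>A\<^esub> a) = h a" if a: "a \<in> carrier A" for a
        proof -
          have "a \<in> N #>\<^bsub>A\<^esub> a" by (rule A.rcos_self[OF a sN])
          then have "(SOME a'. a' \<in> N #>\<^bsub>A\<^esub> a) \<in> N #>\<^bsub>A\<^esub> a" by (rule someI)
          then show ?thesis using hcos[OF a] qcar[OF a] by (simp add: ch_def)
        qed
        have chhom: "ch \<in> hom (A Mod N) circle_group"
        proof (rule homI)
          fix C assume "C \<in> carrier (A Mod N)"
          then obtain c where c: "c \<in> carrier A" "C = N #>\<^bsub>A\<^esub> c" using cosrep by blast
          then show "ch C \<in> carrier circle_group" using chq hom_in_carrier[OF hA] by simp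
        next
          fix C D assume "C \<in> carrier (A Mod N)" "D \<in> carrier (A Mod N)"
          then obtain c d where c: "c \<in> carrier A" "C = N #>\<^bsub>A\<^esub> c"
            and d: "d \<in> carrier A" "D = N #>\<^bsub>A\<^esub> d" using cosrep by blast
          have "C \<otimes>\<^bsub>A Mod N\<^esub> D = N #>\<^bsub>A\<^esub> (c \<otimes>\<^bsub>A\<^esub> d)"
            using c d N.rcos_sum by simp
          then show "ch (C \<otimes>\<^bsub>A Mod N\<^esub> D) = ch C \<otimes>\<^bsub>circle_group\<^esub> ch D"
            using c d chq hom_mult[OF hA] by simp
        qed
        have hopen: "openin TA {a \<in> carrier A. h a \<in> W}" if W: "openin circle_top W" for W
        proof -
          define P where "P = pullback_topology (carrier A) h circle_top"
          have tP: "topspace P = carrier A"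
            unfolding P_def topspace_pullback_topology using hom_in_carrier[OF hA] by auto
          have tabP: "top_ab_group (free_Abelian_group (topspace X)) P"
            unfolding FX P_def by (rule pullback_top_ab[OF A.comm_group_axioms circle_top_ab hA])
          have jb: "continuous_map X circle_top (\<lambda>(x, y). b x y)"
            unfolding X_def by (rule bihom_joint_cont[OF Gd(4) Hd(4) bb])
          have "continuous_map X circle_top (h \<circ> frag_of)"
            by (rule continuous_map_eq[OF jb]) (use hfrag tX S_def in auto)
          then have fP: "continuous_map X P frag_of"
            unfolding P_def by (rule continuous_map_pullback') (use tX fcar in auto)
          have "continuous_map P circle_top (id \<circ> h)"
            unfolding P_def by (rule continuous_map_pullback[OF continuous_map_id])
          then have "openin P {a \<in> topspace P. h a \<in> W}" using W by (simp add: continuous_map_def)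
          then have "openin TA {a \<in> topspace P. h a \<in> W}"
            unfolding TA_def by (rule famT_open[OF tabP fP])
          then show ?thesis using tP by simp
        qed
        have chcont: "continuous_map TT circle_top ch"
          unfolding continuous_map_def
        proof (intro conjI allI impI)
          show "ch \<in> topspace TT \<rightarrow> topspace circle_top"
            using chhom tTT by (auto simp: hom_def)
          fix W assume W: "openin circle_top W"
          define U where "U = {C \<in> topspace TT. ch C \<in> W}"
          have Usub: "U \<subseteq> carrier (A Mod N)" using tTT U_def by auto
          have "{a \<in> carrier A. N #>\<^bsub>A\<^esub> a \<in> U} = {a \<in> carrier A. h a \<in> W}"
            using chq qcar tTT unfolding U_def by auto
          then have "\<Union>U = {a \<in> carrier A. h a \<in> W}" using qUnion[OF Usub] by simp
          then have "openin TA (\<Union>U)" using hopen[OF W] by simp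
          then show "openin TT {C \<in> topspace TT. ch C \<in> W}"
            using openTT Usub U_def by simp
        qed
        have chc: "ch \<in> characters (A Mod N) TT"
          unfolding characters_def using chhom chcont by (simp add: ch_def)
        have "\<Phi> ch = b"
        proof (rule ext)
          fix x show "\<Phi> ch x = b x"
          proof (cases "x \<in> carrier G")
            case True
            show ?thesis
            proof (rule ext)
              fix y show "\<Phi> ch x y = b x y"
              proof (cases "y \<in> carrier H")
                case True
                then show ?thesis using \<open>x \<in> carrier G\<close> chq fcar hfrag S_def
                  by (simp add: \<Phi>_def tmap)
              next
                case False
                then show ?thesis using \<open>x \<in> carrier G\<close> be(2)
                  by (simp add: \<Phi>_def extensional_def)
              qed
            qed
          next
            case False
            then show ?thesis using be(1) by (simp add: \<Phi>_def extensional_def)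
          qed
        qed
        then show "b \<in> \<Phi> ` carrier (dual_group (A Mod N) TT)" using chc dcarr by blast
      qed
    qed
  qed
  then show ?thesis unfolding D by (rule is_isoI)
qed


theorem proposition3p5:
  fixes G :: "'a monoid" and TG :: "'a topology"
    and H :: "'b monoid" and TH :: "'b topology"
    and Q :: "'c monoid" and TQ :: "'c topology" and t :: "'a \<Rightarrow> 'b \<Rightarrow> 'c"
  assumes "class_Q G TG" and "class_Q H TH"
    and "is_Q_tensor TYPE(complex) G TG H TH Q TQ t"
    and "is_Q_tensor TYPE('c) G TG H TH Q TQ t"
  shows "dual_group (tensor_group G H) (tensor_top G TG H TH) \<cong> bichar_group G TG H TH
         \<and> dual_group Q TQ \<cong> bichar_group G TG H TH"
  using part1[OF assms(1,2)] part2[OF assms(1,2,3)] by blast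

end
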